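(* Let $\mathfrak g$ be a nonsemisimple complex Lie algebra, $\mathfrak p$ a nonperfect ideal of $\mathfrak g$, and $\phi:\mathfrak p\to\mathbb C$ a Lie algebra homomorphism. If $w\in W(\phi)$ is nonzero and $\varphi:\mathfrak p\to\mathbb C$ is a Lie algebra homomorphism such that $pw=\varphi(p)w$ for all $p\in\mathfrak p$, then $\varphi=\phi$. That is, every nonzero quasi-Whittaker vector in $W(\phi)$ is of type $\phi$.
   Context: A Lie algebra homomorphism $\phi:\mathfrak p\to\mathbb C$ is a linear map vanishing on $[\mathfrak p,\mathfrak p]$. Let $\mathbb C w_\phi$ be the one-dimensional $\mathfrak p$-module with $pw_\phi=\phi(p)w_\phi$, and $W(\phi)=\mathcal U(\mathfrak g)\otimes_{\mathcal U(\mathfrak p)}\mathbb C w_\phi$ (the universal quasi-Whittaker module of type $\phi$). *)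

theory Defs
  imports Complex_Main "HOL-Library.Function_Algebras"
begin

definition lie_algebra :: "(complex \<Rightarrow> 'g::ab_group_add \<Rightarrow> 'g) \<Rightarrow> ('g \<Rightarrow> 'g \<Rightarrow> 'g) \<Rightarrow> bool" where
  "lie_algebra sc br \<longleftrightarrow>
     vector_space sc \<and>
     (\<forall>a b x y z. br (sc a x + sc b y) z = sc a (br x z) + sc b (br y z)) \<and>
     (\<forall>a b x y z. br z (sc a x + sc b y) = sc a (br z x) + sc b (br z y)) \<and>
     (\<forall>x. br x x = 0) \<and>
     (\<forall>x y z. br x (br y z) + br y (br z x) + br z (br x y) = 0)"

definition derived :: "(complex \<Rightarrow> 'g::ab_group_add \<Rightarrow> 'g) \<Rightarrow> ('g \<Rightarrow> 'g \<Rightarrow> 'g) \<Rightarrow> 'g set \<Rightarrow> 'g set" where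
  "derived sc br A = module.span sc {br a b | a b. a \<in> A \<and> b \<in> A}"

definition lie_ideal :: "(complex \<Rightarrow> 'g::ab_group_add \<Rightarrow> 'g) \<Rightarrow> ('g \<Rightarrow> 'g \<Rightarrow> 'g) \<Rightarrow> 'g set \<Rightarrow> bool" where
  "lie_ideal sc br I \<longleftrightarrow> module.subspace sc I \<and> (\<forall>x p. p \<in> I \<longrightarrow> br x p \<in> I)"

definition solvable_ideal :: "(complex \<Rightarrow> 'g::ab_group_add \<Rightarrow> 'g) \<Rightarrow> ('g \<Rightarrow> 'g \<Rightarrow> 'g) \<Rightarrow> 'g set \<Rightarrow> bool" where
  "solvable_ideal sc br I \<longleftrightarrow> (\<exists>n. (derived sc br ^^ n) I = {0})"

definition semisimple :: "(complex \<Rightarrow> 'g::ab_group_add \<Rightarrow> 'g) \<Rightarrow> ('g \<Rightarrow> 'g \<Rightarrow> 'g) \<Rightarrow> bool" where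
  "semisimple sc br \<longleftrightarrow> (UNIV :: 'g set) \<noteq> {0} \<and>
     (\<forall>I. lie_ideal sc br I \<and> solvable_ideal sc br I \<longrightarrow> I = {0})"

definition lie_hom_to_C :: "(complex \<Rightarrow> 'g::ab_group_add \<Rightarrow> 'g) \<Rightarrow> ('g \<Rightarrow> 'g \<Rightarrow> 'g) \<Rightarrow> 'g set \<Rightarrow> ('g \<Rightarrow> complex) \<Rightarrow> bool" where
  "lie_hom_to_C sc br P \<phi> \<longleftrightarrow>
     (\<forall>a b x y. x \<in> P \<longrightarrow> y \<in> P \<longrightarrow> \<phi> (sc a x + sc b y) = a * \<phi> x + b * \<phi> y) \<and>
     (\<forall>x y. x \<in> P \<longrightarrow> y \<in> P \<longrightarrow> \<phi> (br x y) = 0)"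

text \<open>Free complex vector space on words in 'g: finitely supported functions.
The universal quasi-Whittaker module W(phi) = U(g) \<otimes>_{U(p)} C w_phi is the quotient of this
space by the subspace whrel generated by multilinearity relations (giving T(g)),
the relations u x y v - u y x v - u [x,y] v (giving U(g)), and u p - phi(p) u for p in P
(the induction from C w_phi). A word u represents the element u \<otimes> w_phi.\<close>

definition fin_supp :: "('w \<Rightarrow> complex) \<Rightarrow> bool" where
  "fin_supp f \<longleftrightarrow> finite {w. f w \<noteq> 0}"

definition fscale :: "complex \<Rightarrow> ('w \<Rightarrow> complex) \<Rightarrow> ('w \<Rightarrow> complex)" where
  "fscale c f = (\<lambda>w. c * f w)"

definition delta :: "'w \<Rightarrow> ('w \<Rightarrow> complex)" where
  "delta u = (\<lambda>w. if w = u then 1 else 0)"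

definition whit_gens :: "(complex \<Rightarrow> 'g::ab_group_add \<Rightarrow> 'g) \<Rightarrow> ('g \<Rightarrow> 'g \<Rightarrow> 'g) \<Rightarrow> 'g set \<Rightarrow> ('g \<Rightarrow> complex)
    \<Rightarrow> ('g list \<Rightarrow> complex) set" where
  "whit_gens sc br P \<phi> =
     {delta (u @ [sc a x + sc b y] @ v) - fscale a (delta (u @ [x] @ v)) - fscale b (delta (u @ [y] @ v))
        | u v a b x y. True}
   \<union> {delta (u @ [x, y] @ v) - delta (u @ [y, x] @ v) - delta (u @ [br x y] @ v) | u v x y. True}
   \<union> {delta (u @ [p]) - fscale (\<phi> p) (delta u) | u p. p \<in> P}"

definition whrel :: "(complex \<Rightarrow> 'g::ab_group_add \<Rightarrow> 'g) \<Rightarrow> ('g \<Rightarrow> 'g \<Rightarrow> 'g) \<Rightarrow> 'g set \<Rightarrow> ('g \<Rightarrow> complex)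
    \<Rightarrow> ('g list \<Rightarrow> complex) set" where
  "whrel sc br P \<phi> = module.span fscale (whit_gens sc br P \<phi>)"

definition wact :: "'g \<Rightarrow> ('g list \<Rightarrow> complex) \<Rightarrow> ('g list \<Rightarrow> complex)" where
  "wact x f = (\<lambda>w. if w \<noteq> [] \<and> hd w = x then f (tl w) else 0)"

end

theory Submission
  imports Defs
begin

lemma fscale_vs: "vector_space (fscale :: complex \<Rightarrow> ('w \<Rightarrow> complex) \<Rightarrow> _)"
  by unfold_locales (auto simp: fscale_def fun_eq_iff algebra_simps)

interpretation fv: vector_space "fscale :: complex \<Rightarrow> ('w \<Rightarrow> complex) \<Rightarrow> _"
  by (rule fscale_vs)

lemma wact_diff: "wact x (f - g) = wact x f - wact x g"
  by (auto simp: wact_def fun_eq_iff)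
lemma wact_add: "wact x (f + g) = wact x f + wact x g"
  by (auto simp: wact_def fun_eq_iff)
lemma wact_scale: "wact x (fscale c f) = fscale c (wact x f)"
  by (auto simp: wact_def fscale_def fun_eq_iff)
lemma wact_zero: "wact x 0 = 0"
  by (auto simp: wact_def fun_eq_iff)
lemma wact_delta: "wact x (delta u) = delta (x # u)"
  by (auto simp: wact_def delta_def fun_eq_iff neq_Nil_conv)

definition MM :: "(complex \<Rightarrow> 'g::ab_group_add \<Rightarrow> 'g) \<Rightarrow> ('g \<Rightarrow> 'g \<Rightarrow> 'g) \<Rightarrow> 'g set \<Rightarrow> ('g \<Rightarrow> complex)
    \<Rightarrow> nat \<Rightarrow> ('g list \<Rightarrow> complex) set" where
  "MM sc br P \<phi> n = fv.span ({delta u | u. length u < n} \<union> whit_gens sc br P \<phi>)"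

lemma MM_mono: "m \<le> n \<Longrightarrow> MM sc br P \<phi> m \<subseteq> MM sc br P \<phi> n"
  unfolding MM_def by (rule fv.span_mono) auto

lemma MM_delta: "length u < n \<Longrightarrow> delta u \<in> MM sc br P \<phi> n"
  unfolding MM_def by (rule fv.span_base) auto

lemma MM_gen: "g \<in> whit_gens sc br P \<phi> \<Longrightarrow> g \<in> MM sc br P \<phi> n"
  unfolding MM_def by (rule fv.span_base) auto

lemma MM0: "MM sc br P \<phi> 0 = whrel sc br P \<phi>"
  unfolding MM_def whrel_def by simp

lemma wact_gen:
  assumes "g \<in> whit_gens sc br P \<phi>"
  shows "wact x g \<in> whit_gens sc br P \<phi>"
proof -
  from assms show ?thesis
    unfolding whit_gens_def
  proof (elim UnE CollectE exE conjE)
    fix u v a b y z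
    assume g: "g = delta (u @ [sc a y + sc b z] @ v) - fscale a (delta (u @ [y] @ v)) - fscale b (delta (u @ [z] @ v))"
    have "wact x g = delta ((x#u) @ [sc a y + sc b z] @ v) - fscale a (delta ((x#u) @ [y] @ v)) - fscale b (delta ((x#u) @ [z] @ v))"
      by (simp add: g wact_diff wact_scale wact_delta)
    then show "wact x g \<in> {delta (u @ [sc a x + sc b y] @ v) - fscale a (delta (u @ [x] @ v)) - fscale b (delta (u @ [y] @ v)) | u v a b x y. True} \<union>
    {delta (u @ [x, y] @ v) - delta (u @ [y, x] @ v) - delta (u @ [br x y] @ v) | u v x y. True} \<union>
    {delta (u @ [p]) - fscale (\<phi> p) (delta u) | u p. p \<in> P}" by blast
  next
    fix u v y z
    assume g: "g = delta (u @ [y, z] @ v) - delta (u @ [z, y] @ v) - delta (u @ [br y z] @ v)"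
    have "wact x g = delta ((x#u) @ [y, z] @ v) - delta ((x#u) @ [z, y] @ v) - delta ((x#u) @ [br y z] @ v)"
      by (simp add: g wact_diff wact_scale wact_delta)
    then show "wact x g \<in> {delta (u @ [sc a x + sc b y] @ v) - fscale a (delta (u @ [x] @ v)) - fscale b (delta (u @ [y] @ v)) | u v a b x y. True} \<union>
    {delta (u @ [x, y] @ v) - delta (u @ [y, x] @ v) - delta (u @ [br x y] @ v) | u v x y. True} \<union>
    {delta (u @ [p]) - fscale (\<phi> p) (delta u) | u p. p \<in> P}" by blast
  next
    fix u p
    assume g: "g = delta (u @ [p]) - fscale (\<phi> p) (delta u)" and p: "p \<in> P"
    have "wact x g = delta ((x#u) @ [p]) - fscale (\<phi> p) (delta (x#u))"
      by (simp add: g wact_diff wact_scale wact_delta)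
    then show "wact x g \<in> {delta (u @ [sc a x + sc b y] @ v) - fscale a (delta (u @ [x] @ v)) - fscale b (delta (u @ [y] @ v)) | u v a b x y. True} \<union>
    {delta (u @ [x, y] @ v) - delta (u @ [y, x] @ v) - delta (u @ [br x y] @ v) | u v x y. True} \<union>
    {delta (u @ [p]) - fscale (\<phi> p) (delta u) | u p. p \<in> P}" using p by blast
  qed
qed

lemma keyA:
  assumes ideal: "\<forall>x q. q \<in> P \<longrightarrow> br x q \<in> P"
  shows "q \<in> P \<Longrightarrow> delta (u @ q # v) - fscale (\<phi> q) (delta (u @ v)) \<in> MM sc br P \<phi> (length u + length v)"
proof (induction v arbitrary: u q)
  case Nil
  have "delta (u @ [q]) - fscale (\<phi> q) (delta u) \<in> whit_gens sc br P \<phi>"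
    unfolding whit_gens_def using Nil by blast
  then show ?case unfolding append_Nil2 list.size(3) add_0_right by (rule MM_gen)
next
  case (Cons x v)
  let ?n = "length u + length (x # v)"
  have g: "delta (u @ [x, q] @ v) - delta (u @ [q, x] @ v) - delta (u @ [br x q] @ v) \<in> MM sc br P \<phi> ?n"
    by (rule MM_gen) (unfold whit_gens_def, blast)
  have I1: "delta ((u @ [x]) @ q # v) - fscale (\<phi> q) (delta ((u @ [x]) @ v)) \<in> MM sc br P \<phi> ?n"
  proof -
    have e: "length (u @ [x]) + length v = ?n" by simp
    show ?thesis using Cons.IH[where u="u @ [x]", OF Cons.prems] unfolding e by (simp only: append_assoc append_Cons append_Nil)
  qed
  have bq: "br x q \<in> P" using ideal Cons.prems by blast
  have I2: "delta (u @ br x q # v) - fscale (\<phi> (br x q)) (delta (u @ v)) \<in> MM sc br P \<phi> ?n"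
    by (rule subsetD[OF MM_mono Cons.IH[OF bq]]) simp
  have D: "delta (u @ v) \<in> MM sc br P \<phi> ?n" by (rule MM_delta) simp
  have eq: "delta (u @ q # x # v) - fscale (\<phi> q) (delta (u @ x # v)) =
     (delta ((u @ [x]) @ q # v) - fscale (\<phi> q) (delta ((u @ [x]) @ v)))
     - (delta (u @ br x q # v) - fscale (\<phi> (br x q)) (delta (u @ v)))
     - fscale (\<phi> (br x q)) (delta (u @ v))
     - (delta (u @ [x, q] @ v) - delta (u @ [q, x] @ v) - delta (u @ [br x q] @ v))"
    by (simp add: algebra_simps)
  have R: "(delta ((u @ [x]) @ q # v) - fscale (\<phi> q) (delta ((u @ [x]) @ v)))
     - (delta (u @ br x q # v) - fscale (\<phi> (br x q)) (delta (u @ v)))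
     - fscale (\<phi> (br x q)) (delta (u @ v))
     - (delta (u @ [x, q] @ v) - delta (u @ [q, x] @ v) - delta (u @ [br x q] @ v)) \<in> MM sc br P \<phi> ?n"
    unfolding MM_def
    by (rule fv.span_diff[OF fv.span_diff[OF fv.span_diff[OF I1[unfolded MM_def] I2[unfolded MM_def]]
          fv.span_scale[OF D[unfolded MM_def]]] g[unfolded MM_def]])
  show ?case unfolding eq by (rule R)
qed

lemma keyK:
  assumes ideal: "\<forall>x q. q \<in> P \<longrightarrow> br x q \<in> P" and p: "p \<in> P"
    and f: "f \<in> MM sc br P \<phi> (Suc n)"
  shows "wact p f - fscale (\<phi> p) f \<in> MM sc br P \<phi> n"
proof -
  have "f \<in> {f. wact p f - fscale (\<phi> p) f \<in> MM sc br P \<phi> n}"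
    using f unfolding MM_def
  proof (induction rule: fv.span_induct)
    case base
    show ?case
    proof (rule fv.subspaceI, goal_cases)
      case 1
      have "wact p 0 - fscale (\<phi> p) 0 = 0" by (simp only: wact_zero fv.scale_zero_right diff_zero)
      then show ?case unfolding mem_Collect_eq by (simp only: fv.span_zero)
    next
      case (2 x y)
      have "wact p (x + y) - fscale (\<phi> p) (x + y) = (wact p x - fscale (\<phi> p) x) + (wact p y - fscale (\<phi> p) y)"
        by (simp add: wact_add fv.scale_right_distrib algebra_simps)
      then show ?case unfolding mem_Collect_eq
        by (simp only:) (rule fv.span_add[OF 2(1)[unfolded mem_Collect_eq] 2(2)[unfolded mem_Collect_eq]])
    next
      case (3 c x)
      have "wact p (fscale c x) - fscale (\<phi> p) (fscale c x) = fscale c (wact p x - fscale (\<phi> p) x)"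
        by (simp add: wact_scale fv.scale_right_diff_distrib mult.commute)
      then show ?case unfolding mem_Collect_eq
        by (simp only:) (rule fv.span_scale[OF 3[unfolded mem_Collect_eq]])
    qed
  next
    case (step g)
    then show ?case
    proof
      assume "g \<in> {delta u |u. length u < Suc n}"
      then obtain u where u: "g = delta u" "length u < Suc n" by blast
      have "delta ([] @ p # u) - fscale (\<phi> p) (delta ([] @ u)) \<in> MM sc br P \<phi> (length ([]::'a list) + length u)"
        by (rule keyA[OF ideal p, where u="[]" and v=u and sc=sc and \<phi>=\<phi>])
      then have "wact p g - fscale (\<phi> p) g \<in> MM sc br P \<phi> n"
        using u MM_mono[of "length u" n sc br P \<phi>] by (auto simp: wact_delta)
      then show ?thesis unfolding MM_def mem_Collect_eq .
    next
      assume gg: "g \<in> whit_gens sc br P \<phi>"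
      have "wact p g - fscale (\<phi> p) g \<in> MM sc br P \<phi> n"
        unfolding MM_def
        by (intro fv.span_diff fv.span_scale fv.span_base) (use gg wact_gen[OF gg] in auto)
      then show ?thesis unfolding MM_def mem_Collect_eq .
    qed
  qed
  then show ?thesis by simp
qed

lemma fin_supp_MM:
  assumes "fin_supp w"
  shows "\<exists>N. w \<in> MM sc br P \<phi> N"
proof -
  define S where "S = {u. w u \<noteq> 0}"
  have fS: "finite S" using assms by (simp add: fin_supp_def S_def)
  then obtain N where N: "\<forall>u\<in>S. length u < N"
    by (metis finite_nat_set_iff_bounded finite_imageI imageI)
  have eq: "w = (\<Sum>u\<in>S. fscale (w u) (delta u))"
  proof
    fix v
    have "(\<Sum>u\<in>S. fscale (w u) (delta u)) v = (\<Sum>u\<in>S. fscale (w u) (delta u) v)"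
      by (induction S rule: infinite_finite_induct) auto
    also have "\<dots> = (\<Sum>u\<in>S. if u = v then w u else 0)"
      by (rule sum.cong) (auto simp: fscale_def delta_def)
    also have "\<dots> = w v" using fS by (auto simp: S_def)
    finally show "w v = (\<Sum>u\<in>S. fscale (w u) (delta u)) v" by simp
  qed
  have "w \<in> MM sc br P \<phi> N"
    unfolding MM_def
    by (subst eq, intro fv.span_sum fv.span_scale fv.span_base) (use N in auto)
  then show ?thesis by blast
qed

theorem proposition2p6:
  fixes sc :: "complex \<Rightarrow> 'g::ab_group_add \<Rightarrow> 'g"
    and br :: "'g \<Rightarrow> 'g \<Rightarrow> 'g"
    and P :: "'g set"
    and \<phi> \<psi> :: "'g \<Rightarrow> complex"
    and w :: "'g list \<Rightarrow> complex"
  assumes "lie_algebra sc br"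
    and "\<not> semisimple sc br"
    and "lie_ideal sc br P"
    and "derived sc br P \<noteq> P"
    and "lie_hom_to_C sc br P \<phi>"
    and "fin_supp w"
    and "w \<notin> whrel sc br P \<phi>"
    and "lie_hom_to_C sc br P \<psi>"
    and "\<forall>p\<in>P. wact p w - fscale (\<psi> p) w \<in> whrel sc br P \<phi>"
  shows "\<forall>p\<in>P. \<psi> p = \<phi> p"
proof (rule ballI, rule ccontr)
  fix p assume p: "p \<in> P" and ne: "\<psi> p \<noteq> \<phi> p"
  have ideal: "\<forall>x q. q \<in> P \<longrightarrow> br x q \<in> P" using assms(3) by (simp add: lie_ideal_def)
  have hw: "wact p w - fscale (\<psi> p) w \<in> whrel sc br P \<phi>" using assms(9) p by blast
  have step: "w \<in> MM sc br P \<phi> n" if "w \<in> MM sc br P \<phi> (Suc n)" for n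
  proof -
    have a: "wact p w - fscale (\<phi> p) w \<in> MM sc br P \<phi> n" by (rule keyK[OF ideal p that])
    have b: "wact p w - fscale (\<psi> p) w \<in> MM sc br P \<phi> n"
      using hw MM_mono[of 0 n sc br P \<phi>] unfolding MM0 by blast
    have "(wact p w - fscale (\<phi> p) w) - (wact p w - fscale (\<psi> p) w) = fscale (\<psi> p - \<phi> p) w"
      by (simp add: fv.scale_left_diff_distrib)
    then have c: "fscale (\<psi> p - \<phi> p) w \<in> MM sc br P \<phi> n"
      using fv.span_diff[OF a[unfolded MM_def] b[unfolded MM_def]] unfolding MM_def by (simp only:)
    have "fscale (inverse (\<psi> p - \<phi> p)) (fscale (\<psi> p - \<phi> p) w) = w"
      using ne by simp
    with fv.span_scale[OF c[unfolded MM_def], of "inverse (\<psi> p - \<phi> p)"] show ?thesis unfolding MM_def by (simp only:)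
  qed
  have "w \<in> MM sc br P \<phi> n \<Longrightarrow> w \<in> MM sc br P \<phi> 0" for n
  proof (induction n)
    case (Suc n) then show ?case using step by blast
  qed simp
  with fin_supp_MM[OF assms(6)] have "w \<in> MM sc br P \<phi> 0" by blast
  with assms(7) show False unfolding MM0 by blast
qed

end
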